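(* Let $n\ge 2$. For every $c>0$ the quintuple $\big((z(n)+1)c,\;k(n)c,\;c,\;(z(n)+1)c,\;(k(n)+1)c\big)$ belongs to $\mathcal{C}$, and $$G\big((z(n)+1)c,k(n)c,c,(z(n)+1)c,(k(n)+1)c\big)=\widetilde G(n):=\frac{4}{(k(n)+1)^2}\Big(1+\frac{1}{z(n)}\Big).$$ In particular $\sup_{(a,b,c,d,\theta)\in\mathcal{C}}G(a,b,c,d,\theta)\ge \widetilde G(n)$.
   Context: A quintuple $(a,b,c,d,\theta)$ is admissible if $d\ge a>c>0$, $\theta>b\ge 0$, and $(a-c)^2\theta^2-a(\theta-b)\big[(2\theta+na)(a-c)+a(n-1)(\theta-b)\big]\ge 0$; $\mathcal{C}$ is the set of admissible quintuples. For $(a,b,c,d,\theta)\in\mathcal{C}$, $G=\min\{G_1,G_2\}$ with $G_1=\frac{4d(\theta-b)}{\theta^2}$ and $G_2$ the unique positive root $x$ of $(d-a)\theta^2x^2+(d-c)\theta^2x-4cd(\theta-b)=0$. Further, $k(n)=3\sqrt{n}\cos\big(\tfrac13\arccos(1/\sqrt n)\big)$ and $z(n)=\dfrac{k(n)^2-3n+\sqrt{k(n)^4-6nk(n)^2-6nk(n)}}{3n}$. *)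

theory Defs
  imports Complex_Main "HOL-Library.Extended_Real"
begin

type_synonym quint = "real \<times> real \<times> real \<times> real \<times> real"

definition admissible :: "nat \<Rightarrow> quint \<Rightarrow> bool" where
  "admissible n q = (case q of (a, b, c, d, \<theta>) \<Rightarrow>
     d \<ge> a \<and> a > c \<and> c > 0 \<and> \<theta> > b \<and> b \<ge> 0 \<and>
     (a - c)^2 * \<theta>^2 - a * (\<theta> - b) * ((2 * \<theta> + real n * a) * (a - c)
        + a * (real n - 1) * (\<theta> - b)) \<ge> 0)"

definition admC :: "nat \<Rightarrow> quint set" where
  "admC n = {q. admissible n q}"

definition G1 :: "quint \<Rightarrow> real" where
  "G1 q = (case q of (a, b, c, d, \<theta>) \<Rightarrow> 4 * d * (\<theta> - b) / \<theta>^2)"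

definition G2 :: "quint \<Rightarrow> real" where
  "G2 q = (case q of (a, b, c, d, \<theta>) \<Rightarrow>
     (THE x. x > 0 \<and> (d - a) * \<theta>^2 * x^2 + (d - c) * \<theta>^2 * x - 4 * c * d * (\<theta> - b) = 0))"

definition G :: "quint \<Rightarrow> real" where
  "G q = min (G1 q) (G2 q)"

definition kfun :: "nat \<Rightarrow> real" where
  "kfun n = 3 * sqrt (real n) * cos (arccos (1 / sqrt (real n)) / 3)"

definition zfun :: "nat \<Rightarrow> real" where
  "zfun n = (kfun n ^ 2 - 3 * real n
     + sqrt (kfun n ^ 4 - 6 * real n * kfun n ^ 2 - 6 * real n * kfun n)) / (3 * real n)"

definition Gtilde :: "nat \<Rightarrow> real" where
  "Gtilde n = 4 / (kfun n + 1)^2 * (1 + 1 / zfun n)"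

end

theory Submission
  imports Defs
begin

lemma k_facts:
  assumes "n \<ge> 2"
  shows "kfun n > 0 \<and> 4 * kfun n ^ 3 = 27 * real n * (kfun n + 1)"
proof -
  define t where "t = arccos (1 / sqrt (real n)) / 3"
  have sn: "sqrt (real n) > 1" using assms by simp
  have y0: "0 \<le> 1 / sqrt (real n)" and y1: "1 / sqrt (real n) \<le> 1" using sn by auto
  have "0 \<le> t" unfolding t_def using arccos_lbound[of "1 / sqrt (real n)"] y0 y1 by simp
  moreover have "t \<le> pi/6" unfolding t_def using arccos_le_pi2[OF y0 y1] by simp
  ultimately have ct: "cos t > 0" using pi_gt_zero by (intro cos_gt_zero_pi) linarith+
  have k: "kfun n = 3 * sqrt (real n) * cos t" unfolding kfun_def t_def by simp
  have e: "-1 \<le> 1 / sqrt (real n)" using y0 by linarith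
  have "cos (3 * t) = 1 / sqrt (real n)" unfolding t_def using cos_arccos[OF e y1] by simp
  hence c3: "4 * cos t ^ 3 - 3 * cos t = 1 / sqrt (real n)" by (simp add: cos_treble_cos)
  have sq: "sqrt (real n) ^ 2 = real n" by simp
  have "4 * kfun n ^ 3 = 27 * sqrt (real n)^2 * sqrt (real n) * (4 * cos t ^ 3)"
    unfolding k by (simp add: power_mult_distrib power3_eq_cube)
  also have "\<dots> = 27 * sqrt (real n)^2 * sqrt (real n) * (3 * cos t + 1 / sqrt (real n))"
    using c3 by simp
  also have "\<dots> = 27 * real n * (kfun n + 1)" unfolding k sq using sn
    by (simp add: field_simps)
  finally show ?thesis using k ct sn by simp
qed

theorem proposition1p6:
  fixes n :: nat and c :: real
  assumes "n \<ge> 2" and "c > 0"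
  shows "((zfun n + 1) * c, kfun n * c, c, (zfun n + 1) * c, (kfun n + 1) * c) \<in> admC n
       \<and> G ((zfun n + 1) * c, kfun n * c, c, (zfun n + 1) * c, (kfun n + 1) * c) = Gtilde n
       \<and> (SUP q\<in>admC n. ereal (G q)) \<ge> ereal (Gtilde n)"
proof -
  define k where "k = kfun n"
  define N where "N = real n"
  have kp: "k > 0" and cub: "4 * k^3 = 27 * N * (k + 1)" using k_facts[OF assms(1)] k_def N_def by auto
  have Np: "N \<ge> 2" using assms(1) N_def by simp
  have D: "k ^ 4 - 6 * N * k ^ 2 - 6 * N * k = (9 * N * (k + 1) / (4 * k))^2"
  proof -
    have "(k ^ 4 - 6 * N * k ^ 2 - 6 * N * k) * (16 * k^2) = (9 * N * (k + 1))^2"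
    proof -
      have "(k ^ 4 - 6 * N * k ^ 2 - 6 * N * k) * (16 * k^2)
          = (4*k^3)^2 - 24 * N * k * (4 * k^3) - 24 * N * (4 * k^3)"
        by (simp add: algebra_simps power2_eq_square power3_eq_cube power4_eq_xxxx)
      also have "\<dots> = (27 * N * (k + 1))^2 - 24 * N * k * (27 * N * (k + 1)) - 24 * N * (27 * N * (k + 1))"
        unfolding cub ..
      also have "\<dots> = (9 * N * (k + 1))^2"
        by (simp add: algebra_simps power2_eq_square)
      finally show ?thesis .
    qed
    thus ?thesis using kp by (simp add: field_simps power2_eq_square)
  qed
  have sD: "sqrt (k ^ 4 - 6 * N * k ^ 2 - 6 * N * k) = 9 * N * (k + 1) / (4 * k)"
    unfolding D using kp Np by simp
  have z: "zfun n = 2 + 3 / k"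
  proof -
    have "zfun n = (k^2 - 3 * N + 9 * N * (k + 1) / (4 * k)) / (3 * N)"
      unfolding zfun_def sD[unfolded k_def N_def] k_def N_def by simp
    also have "\<dots> = (4*k^3 - 12 * N * k + 9 * N * (k + 1)) / (12 * N * k)"
      using kp Np by (simp add: field_simps power2_eq_square power3_eq_cube)
    also have "\<dots> = (27 * N * (k + 1) - 12 * N * k + 9 * N * (k + 1)) / (12 * N * k)"
      using cub by simp
    also have "\<dots> = 2 + 3 / k" using kp Np by (simp add: field_simps)
    finally show ?thesis .
  qed
  define Z where "Z = zfun n"
  have Zk: "Z * k = 2 * k + 3" using z kp Z_def by (simp add: field_simps)
  have Z1: "Z > 1" using z kp Z_def by (simp add: add_pos_pos)
  have P: "Z^2 * (k+1)^2 - (Z+1) * ((2*(k+1) + N*(Z+1)) * Z + (Z+1) * (N - 1)) = 0"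
  proof -
    have "k^3 * (Z^2 * (k+1)^2 - (Z+1) * ((2*(k+1) + N*(Z+1)) * Z + (Z+1) * (N - 1)))
       = -N*(Z*k)^3 + (k^2-3*N)*(Z*k)^2*k - (2*k+3*N)*(Z*k)*k^2 - (N-1)*k^3"
      by (simp add: algebra_simps power2_eq_square power3_eq_cube)
    also have "\<dots> = (k+1)^2 * (4*k^3 - 27*N*(k+1))" unfolding Zk
      by (simp add: algebra_simps power2_eq_square power3_eq_cube)
    also have "\<dots> = 0" using cub by simp
    finally show ?thesis using kp by simp
  qed
  define q where "q = ((Z + 1) * c, k * c, c, (Z + 1) * c, (k + 1) * c)"
  have adm: "q \<in> admC n"
  proof -
    have e: "((Z + 1) * c - c)^2 * ((k + 1) * c)^2 - (Z + 1) * c * ((k + 1) * c - k * c) *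
       ((2 * ((k + 1) * c) + N * ((Z + 1) * c)) * ((Z + 1) * c - c)
        + (Z + 1) * c * (N - 1) * ((k + 1) * c - k * c))
      = c^4 * (Z^2 * (k+1)^2 - (Z+1) * ((2*(k+1) + N*(Z+1)) * Z + (Z+1) * (N - 1)))"
      by (simp add: algebra_simps power2_eq_square power4_eq_xxxx)
    show ?thesis unfolding q_def admC_def admissible_def using e P Z1 kp assms(2)
      by (simp add: N_def[symmetric] mult_pos_pos)
  qed
  have G1v: "G1 q = 4 * (Z + 1) / (k+1)^2"
    proof -
    have "G1 q = (4 * (Z + 1)) * c^2 / ((k+1)^2 * c^2)"
      unfolding q_def G1_def by (simp add: algebra_simps power2_eq_square)
    also have "\<dots> = 4 * (Z + 1) / (k+1)^2" using assms(2) by simp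
    finally show ?thesis .
  qed
  have G2v: "G2 q = 4 * (Z + 1) / (Z * (k+1)^2)"
  proof -
    let ?x = "4 * (Z + 1) / (Z * (k+1)^2)"
    have pos: "Z * c * ((k + 1) * c)^2 > 0" using Z1 kp assms(2) by simp
    have eq: "\<And>x. ((Z + 1) * c - (Z + 1) * c) * ((k + 1) * c)^2 * x^2 + ((Z + 1) * c - c) * ((k + 1) * c)^2 * x
         - 4 * c * ((Z + 1) * c) * ((k + 1) * c - k * c) = 0 \<longleftrightarrow> x = ?x"
    proof -
      fix x
      have "((Z + 1) * c - (Z + 1) * c) * ((k + 1) * c)^2 * x^2 + ((Z + 1) * c - c) * ((k + 1) * c)^2 * x
         - 4 * c * ((Z + 1) * c) * ((k + 1) * c - k * c) = (Z * c * ((k + 1) * c)^2) * (x - ?x)"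
      proof -
        have m: "Z * c * ((k + 1) * c)^2 * ?x = 4 * (Z + 1) * c^3"
        proof -
          have "?x * (Z * (k+1)^2) = 4 * (Z + 1)" using Z1 kp by simp
          moreover have "\<And>y. y * (Z * (k+1)^2) = 4 * (Z + 1) \<Longrightarrow> Z * c * ((k + 1) * c)^2 * y = 4 * (Z + 1) * c^3"
          proof -
            fix y assume h: "y * (Z * (k+1)^2) = 4 * (Z + 1)"
            have "Z * c * ((k + 1) * c)^2 * y = c^3 * (y * (Z * (k+1)^2))"
              by (simp add: algebra_simps power2_eq_square power3_eq_cube)
            thus "Z * c * ((k + 1) * c)^2 * y = 4 * (Z + 1) * c^3" using h by simp
          qed
          ultimately show ?thesis by blast
        qed
        have "((Z + 1) * c - (Z + 1) * c) * ((k + 1) * c)^2 * x^2 + ((Z + 1) * c - c) * ((k + 1) * c)^2 * x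
         - 4 * c * ((Z + 1) * c) * ((k + 1) * c - k * c) = Z * c * ((k + 1) * c)^2 * x - 4 * (Z + 1) * c^3"
          by (simp add: algebra_simps power2_eq_square power3_eq_cube)
        also have "\<dots> = (Z * c * ((k + 1) * c)^2) * (x - ?x)" using m by (simp add: algebra_simps)
        finally show ?thesis .
      qed
      thus "?thesis x" using pos Z1 kp assms(2) by simp
    qed
    have xp: "?x > 0" using Z1 kp by simp
    show ?thesis unfolding q_def G2_def prod.case
      by (rule the_equality) (use eq xp in blast)+
  qed
  have Gv: "G q = Gtilde n"
  proof -
    have zz: "1 \<le> Z * Z" using mult_mono[of 1 Z 1 Z] Z1 by simp
    have "G2 q \<le> G1 q" unfolding G1v G2v using Z1 kp zz
      by (simp add: divide_le_cancel field_simps)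
    hence "G q = G2 q" unfolding G_def by simp
    thus ?thesis unfolding G2v Gtilde_def Z_def k_def using Z1[unfolded Z_def]
      by (simp add: field_simps)
  qed
  have sup: "(SUP q\<in>admC n. ereal (G q)) \<ge> ereal (Gtilde n)"
    using SUP_upper[OF adm, of "\<lambda>q. ereal (G q)"] Gv by simp
  show ?thesis using adm Gv sup unfolding q_def Z_def k_def by simp
qed

end
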